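(* Let $f\colon X\to X$ be a piecewise $\lambda$-contraction and fix $x_0\in X$. Then $\omega(f,x)\subseteq\Omega(f)$ for every $x\in Z(f)$.
   Context: $(X,d)$ is a compact metric space whose open balls are connected, with $\mathrm{diam}(X)>0$, and $\lambda\in(0,1)$. A piecewise $\lambda$-contraction $f$: there exist $N\in\mathbb{N}$, open connected pairwise disjoint $A_1,\dots,A_N\subset X$ with dense union $X'$, and bi-Lipschitz $\varphi_i\colon X\to X$ with Lipschitz constant $\le\lambda$, $f|_{A_i}=\varphi_i|_{A_i}$; $S(f)=X\setminus X'$. $x$ is regular of order $n$ if $f^j(x)\notin S(f)$ for $0\le j<n$, regular if for all $n$; $Z(f)$ is the set of regular points. $\mathcal{I}_n(f)$ is the set of itineraries of order $n$, i.e. tuples $(i_0,\dots,i_{n-1})$ such that some regular point $x$ of order $n$ has $f^j(x)\in A_{i_j}$ for $0\le j<n$. For $\alpha=(i_0,\dots,i_{n-1})$, $\varphi^\alpha=\varphi_{i_{n-1}}\circ\cdots\circ\varphi_{i_0}$. $\Omega(f)=\bigcap_{m\ge1}\overline{\bigcup_{n\ge m}\{\varphi^\alpha(x_0):\alpha\in\mathcal{I}_n(f)\}}$. $\omega(f,x)=\bigcap_{m\ge1}\overline{\bigcup_{n\ge m}\{f^n(x)\}}$. *)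

theory Defs
  imports "HOL-Analysis.Analysis"
begin

definition good_space :: "'a::metric_space set \<Rightarrow> bool" where
  "good_space X \<longleftrightarrow> compact X \<and> (\<forall>x\<in>X. \<forall>r>0. connected (ball x r \<inter> X)) \<and> diameter X > 0"

definition bi_lipschitz_on :: "'a::metric_space set \<Rightarrow> ('a \<Rightarrow> 'a) \<Rightarrow> bool" where
  "bi_lipschitz_on X g \<longleftrightarrow> (\<exists>L. L-lipschitz_on X g) \<and>
     (\<exists>c>0. \<forall>x\<in>X. \<forall>y\<in>X. c * dist x y \<le> dist (g x) (g y))"

definition pw_contraction ::
  "'a::metric_space set \<Rightarrow> real \<Rightarrow> ('a \<Rightarrow> 'a) \<Rightarrow> nat \<Rightarrow> (nat \<Rightarrow> 'a set) \<Rightarrow> (nat \<Rightarrow> 'a \<Rightarrow> 'a) \<Rightarrow> bool" where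
  "pw_contraction X lam f N A \<phi> \<longleftrightarrow>
     good_space X \<and> 0 < lam \<and> lam < 1 \<and>
     f ` X \<subseteq> X \<and>
     (\<forall>i<N. openin (top_of_set X) (A i) \<and> connected (A i)) \<and>
     (\<forall>i<N. \<forall>j<N. i \<noteq> j \<longrightarrow> A i \<inter> A j = {}) \<and>
     X \<subseteq> closure (\<Union>i<N. A i) \<and>
     (\<forall>i<N. \<phi> i ` X \<subseteq> X \<and> bi_lipschitz_on X (\<phi> i) \<and> lam-lipschitz_on X (\<phi> i)) \<and>
     (\<forall>i<N. \<forall>x\<in>A i. f x = \<phi> i x)"

definition singular_set :: "'a set \<Rightarrow> nat \<Rightarrow> (nat \<Rightarrow> 'a set) \<Rightarrow> 'a set" where
  "singular_set X N A = X - (\<Union>i<N. A i)"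

definition regular_of_order :: "'a set \<Rightarrow> ('a \<Rightarrow> 'a) \<Rightarrow> nat \<Rightarrow> (nat \<Rightarrow> 'a set) \<Rightarrow> nat \<Rightarrow> 'a \<Rightarrow> bool" where
  "regular_of_order X f N A n x \<longleftrightarrow> x \<in> X \<and> (\<forall>j<n. (f ^^ j) x \<notin> singular_set X N A)"

definition regular_set :: "'a set \<Rightarrow> ('a \<Rightarrow> 'a) \<Rightarrow> nat \<Rightarrow> (nat \<Rightarrow> 'a set) \<Rightarrow> 'a set" where
  "regular_set X f N A = {x. \<forall>n. regular_of_order X f N A n x}"

definition itineraries :: "'a set \<Rightarrow> ('a \<Rightarrow> 'a) \<Rightarrow> nat \<Rightarrow> (nat \<Rightarrow> 'a set) \<Rightarrow> nat \<Rightarrow> nat list set" where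
  "itineraries X f N A n = {\<alpha>. length \<alpha> = n \<and>
     (\<exists>x. regular_of_order X f N A n x \<and> (\<forall>j<n. (f ^^ j) x \<in> A (\<alpha> ! j)))}"

text \<open>phi^alpha = phi_(i_(n-1)) o ... o phi_(i_0).\<close>
definition phi_comp :: "(nat \<Rightarrow> 'a \<Rightarrow> 'a) \<Rightarrow> nat list \<Rightarrow> 'a \<Rightarrow> 'a" where
  "phi_comp \<phi> \<alpha> = fold (\<lambda>i g. \<phi> i \<circ> g) \<alpha> id"

definition Omega_set ::
  "'a::topological_space set \<Rightarrow> ('a \<Rightarrow> 'a) \<Rightarrow> nat \<Rightarrow> (nat \<Rightarrow> 'a set) \<Rightarrow> (nat \<Rightarrow> 'a \<Rightarrow> 'a) \<Rightarrow> 'a \<Rightarrow> 'a set" where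
  "Omega_set X f N A \<phi> x0 =
     (\<Inter>m\<in>{1..}. closure (\<Union>n\<in>{m..}. {phi_comp \<phi> \<alpha> x0 | \<alpha>. \<alpha> \<in> itineraries X f N A n}))"

definition omega_limit :: "('a::topological_space \<Rightarrow> 'a) \<Rightarrow> 'a \<Rightarrow> 'a set" where
  "omega_limit f x = (\<Inter>m\<in>{1..}. closure (\<Union>n\<in>{m..}. {(f ^^ n) x}))"

lemma phi_comp_sanity: "phi_comp \<phi> [a, b] x = \<phi> b (\<phi> a x)"
  by (simp add: phi_comp_def)

end

theory Submission
  imports Defs
begin

lemma phi_comp_snoc: "phi_comp \<phi> (xs @ [a]) z = \<phi> a (phi_comp \<phi> xs z)"
  by (simp add: phi_comp_def)

lemma main_aux:
  assumes pw: "pw_contraction X lam f N A \<phi>" and x0: "x0 \<in> X" and x: "x \<in> X"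
    and g: "\<And>j. j < n \<Longrightarrow> g j < N \<and> (f ^^ j) x \<in> A (g j)"
  shows "phi_comp \<phi> (map g [0..<n]) x = (f ^^ n) x \<and> phi_comp \<phi> (map g [0..<n]) x \<in> X
     \<and> phi_comp \<phi> (map g [0..<n]) x0 \<in> X
     \<and> dist (phi_comp \<phi> (map g [0..<n]) x) (phi_comp \<phi> (map g [0..<n]) x0) \<le> lam ^ n * dist x x0"
  using g
proof (induction n)
  case 0
  then show ?case using x x0 by (simp add: phi_comp_def)
next
  case (Suc n)
  let ?p = "phi_comp \<phi> (map g [0..<n])"
  have IH: "?p x = (f ^^ n) x \<and> ?p x \<in> X \<and> ?p x0 \<in> X \<and> dist (?p x) (?p x0) \<le> lam ^ n * dist x x0"
    using Suc by auto
  have gn: "g n < N" "(f ^^ n) x \<in> A (g n)" using Suc.prems by auto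
  have maps: "\<phi> (g n) ` X \<subseteq> X" and lip: "lam-lipschitz_on X (\<phi> (g n))"
    and fe: "f ((f ^^ n) x) = \<phi> (g n) ((f ^^ n) x)" and lam: "0 < lam"
    using pw gn unfolding pw_contraction_def by auto
  have eq: "phi_comp \<phi> (map g [0..<Suc n]) z = \<phi> (g n) (?p z)" for z
    by (simp add: phi_comp_snoc)
  have d: "dist (\<phi> (g n) (?p x)) (\<phi> (g n) (?p x0)) \<le> lam * dist (?p x) (?p x0)"
    using lipschitz_onD[OF lip] IH by blast
  also have "\<dots> \<le> lam * (lam ^ n * dist x x0)"
    using IH lam by (intro mult_left_mono) auto
  finally show ?case using IH maps fe unfolding eq by auto
qed

theorem lemma3p2:
  fixes X :: "'a::metric_space set" and lam :: real and f :: "'a \<Rightarrow> 'a"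
    and N :: nat and A :: "nat \<Rightarrow> 'a set" and \<phi> :: "nat \<Rightarrow> 'a \<Rightarrow> 'a" and x0 :: 'a
  assumes "pw_contraction X lam f N A \<phi>"
    and "x0 \<in> X"
  shows "\<forall>x \<in> regular_set X f N A. omega_limit f x \<subseteq> Omega_set X f N A \<phi> x0"
proof (intro ballI subsetI)
  fix x y
  assume xr: "x \<in> regular_set X f N A" and y: "y \<in> omega_limit f x"
  have xX: "x \<in> X" using xr unfolding regular_set_def regular_of_order_def by auto
  have fX: "f ` X \<subseteq> X" and lam: "0 < lam" "lam < 1"
    using assms(1) unfolding pw_contraction_def by auto
  have itX: "(f ^^ j) x \<in> X" for j
    by (induction j) (use xX fX in auto)
  have ns: "(f ^^ j) x \<notin> singular_set X N A" for j
    using xr unfolding regular_set_def regular_of_order_def by auto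
  have ex: "\<exists>i. i < N \<and> (f ^^ j) x \<in> A i" for j
    using ns[of j] itX[of j] unfolding singular_set_def by auto
  define g where "g j = (SOME i. i < N \<and> (f ^^ j) x \<in> A i)" for j
  have g: "g j < N \<and> (f ^^ j) x \<in> A (g j)" for j
    unfolding g_def using someI_ex[OF ex[of j]] .
  show "y \<in> Omega_set X f N A \<phi> x0"
    unfolding Omega_set_def
  proof (intro InterI, clarsimp)
    fix m :: nat
    assume m: "Suc 0 \<le> m"
    show "y \<in> closure (\<Union>n\<in>{m..}. {phi_comp \<phi> \<alpha> x0 |\<alpha>. \<alpha> \<in> itineraries X f N A n})"
      unfolding closure_approachable
    proof (intro allI impI)
      fix e :: real assume e: "0 < e"
      obtain M where M: "lam ^ M * dist x x0 < e / 2"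
      proof -
        have "(\<lambda>n. lam ^ n * dist x x0) \<longlonglongrightarrow> 0 * dist x x0"
          by (intro tendsto_mult tendsto_const LIMSEQ_power_zero) (use lam in auto)
        then have "\<forall>\<^sub>F n in sequentially. lam ^ n * dist x x0 < e / 2"
          using e by (intro order_tendstoD) auto
        then show ?thesis using that by (auto simp: eventually_sequentially)
      qed
      have "y \<in> closure (\<Union>n\<in>{max m M..}. {(f ^^ n) x})"
        using y m unfolding omega_limit_def by auto
      then obtain n where n: "n \<ge> max m M" "dist ((f ^^ n) x) y < e / 2"
        unfolding closure_approachable using e by (metis (no_types, lifting) UN_E atLeast_iff half_gt_zero singletonD)
      define \<alpha> where "\<alpha> = map g [0..<n]"
      have aux: "phi_comp \<phi> \<alpha> x = (f ^^ n) x \<and> phi_comp \<phi> \<alpha> x \<in> X \<and> phi_comp \<phi> \<alpha> x0 \<in> X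
         \<and> dist (phi_comp \<phi> \<alpha> x) (phi_comp \<phi> \<alpha> x0) \<le> lam ^ n * dist x x0"
        unfolding \<alpha>_def using main_aux[OF assms(1,2) xX, of n g] g by blast
      have "lam ^ n \<le> lam ^ M" using n lam by (intro power_decreasing) auto
      then have "lam ^ n * dist x x0 \<le> lam ^ M * dist x x0" by (simp add: mult_right_mono)
      then have d: "dist (phi_comp \<phi> \<alpha> x0) y < e"
      proof -
        have "dist (phi_comp \<phi> \<alpha> x0) y \<le> dist (phi_comp \<phi> \<alpha> x0) (phi_comp \<phi> \<alpha> x) + dist (phi_comp \<phi> \<alpha> x) y"
          by (rule dist_triangle)
        moreover have "dist (phi_comp \<phi> \<alpha> x0) (phi_comp \<phi> \<alpha> x) \<le> lam ^ n * dist x x0"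
          using aux by (metis dist_commute)
        moreover have "dist (phi_comp \<phi> \<alpha> x) y < e / 2" using aux n by simp
        ultimately show ?thesis using M \<open>lam ^ n * dist x x0 \<le> lam ^ M * dist x x0\<close> by linarith
      qed
      have "\<alpha> \<in> itineraries X f N A n"
        unfolding itineraries_def \<alpha>_def regular_of_order_def using xX ns g by auto
      then show "\<exists>z\<in>\<Union>n\<in>{m..}. {phi_comp \<phi> \<alpha> x0 |\<alpha>. \<alpha> \<in> itineraries X f N A n}. dist z y < e"
        using n d by auto
    qed
  qed
qed

end
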